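(* For all $p\in[0,1]$ and all $n\geq 1$ one has $$P^{\rm Ab}_n(p)\leq P^{\rm AB}_n(p)\qquad\text{and}\qquad P^{\rm aB}_n(p)\geq P^{\rm AB}_n(p).$$
   Context: Fix $n\geq1$. Two players, Alice and Bob, alternately make moves, Alice first, each making $n$ moves; every move is a choice from $\{1,2\}$. Write Alice's moves as $a=(a_1,\dots,a_n)$ and Bob's as $b=(b_1,\dots,b_n)$, and let $|a|_1:=\#\{k:a_k=1\}$, $|b|_1:=\#\{k:b_k=1\}$. Four games are defined by what the outcome of the game is: - in ${\rm AB}_n(p)$ the outcome is $(a,b)$; - in ${\rm Ab}_n(p)$ it is $(a,|b|_1)$; - in ${\rm aB}_n(p)$ it is $(|a|_1,b)$; - in ${\rm ab}_n(p)$ it is $(|a|_1,|b|_1)$. To each possible outcome a winner is assigned independently at random: Bob with probability $p$, Alice with probability $1-p$. The players know this assignment and all previous moves. A winning strategy for Bob is a rule choosing each of his moves as a function of the previous moves that guarantees the outcome is a win for Bob whatever Alice plays. $P^{\rm xx}_n(p)$ (for ${\rm xx}\in\{{\rm AB},{\rm Ab},{\rm aB},{\rm ab}\}$) is the probability that Bob has a winning strategy in ${\rm xx}_n(p)$. *)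

theory Defs
  imports Complex_Main
begin

definition moves :: "nat \<Rightarrow> nat list set" where
  "moves n = {a. length a = n \<and> set a \<subseteq> {1,2}}"

definition ones :: "nat list \<Rightarrow> nat" where
  "ones a = length (filter (\<lambda>x. x = 1) a)"

text \<open>A strategy for Bob maps the history of all previous moves (interleaved,
  Alice first: a_1, b_1, a_2, b_2, ..., a_k) to Bob's next move.\<close>
fun bob_resp :: "(nat list \<Rightarrow> nat) \<Rightarrow> nat list \<Rightarrow> nat list \<Rightarrow> nat list" where
  "bob_resp \<sigma> h [] = []"
| "bob_resp \<sigma> h (x # xs) =
     \<sigma> (h @ [x]) # bob_resp \<sigma> (h @ [x, \<sigma> (h @ [x])]) xs"

text \<open>Bob has a winning strategy when the set of outcomes won by Bob is S,
  and the outcome of a play (a,b) is out a b.\<close>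
definition bob_wins :: "nat \<Rightarrow> (nat list \<Rightarrow> nat list \<Rightarrow> 'o) \<Rightarrow> 'o set \<Rightarrow> bool" where
  "bob_wins n out S \<longleftrightarrow>
     (\<exists>\<sigma>. (\<forall>h. \<sigma> h \<in> {1,2}) \<and>
          (\<forall>a \<in> moves n. out a (bob_resp \<sigma> [] a) \<in> S))"

definition outcomes :: "nat \<Rightarrow> (nat list \<Rightarrow> nat list \<Rightarrow> 'o) \<Rightarrow> 'o set" where
  "outcomes n out = {out a b | a b. a \<in> moves n \<and> b \<in> moves n}"

text \<open>Probability that Bob has a winning strategy when each outcome is
  independently assigned to Bob with probability p (to Alice with 1-p):
  sum over all possible sets S of Bob-won outcomes.\<close>
definition win_prob :: "nat \<Rightarrow> (nat list \<Rightarrow> nat list \<Rightarrow> 'o) \<Rightarrow> real \<Rightarrow> real" where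
  "win_prob n out p =
     (\<Sum>S \<in> Pow (outcomes n out).
        p ^ card S * (1 - p) ^ (card (outcomes n out) - card S) *
        (if bob_wins n out S then 1 else 0))"

definition P_AB :: "nat \<Rightarrow> real \<Rightarrow> real" where
  "P_AB n p = win_prob n (\<lambda>a b. (a, b)) p"

definition P_Ab :: "nat \<Rightarrow> real \<Rightarrow> real" where
  "P_Ab n p = win_prob n (\<lambda>a b. (a, ones b)) p"

definition P_aB :: "nat \<Rightarrow> real \<Rightarrow> real" where
  "P_aB n p = win_prob n (\<lambda>a b. (ones a, b)) p"

definition P_ab :: "nat \<Rightarrow> real \<Rightarrow> real" where
  "P_ab n p = win_prob n (\<lambda>a b. (ones a, ones b)) p"

end

theory Submission
  imports Defs
begin


definition mu :: "real \<Rightarrow> 'a set \<Rightarrow> ('a set \<Rightarrow> bool) \<Rightarrow> real" where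
  "mu p U P = (\<Sum>S\<in>Pow U. p ^ card S * (1 - p) ^ (card U - card S) * (if P S then 1 else 0))"

definition dep :: "'a set \<Rightarrow> ('a set \<Rightarrow> bool) \<Rightarrow> bool" where
  "dep A P \<longleftrightarrow> (\<forall>S. P S = P (S \<inter> A))"

definition upmono :: "('a set \<Rightarrow> bool) \<Rightarrow> bool" where
  "upmono P \<longleftrightarrow> (\<forall>S T. S \<subseteq> T \<longrightarrow> P S \<longrightarrow> P T)"

context
  fixes p :: real
  assumes p0: "0 \<le> p" and p1: "p \<le> 1"
begin

lemma mu_empty: "mu p {} P = (if P {} then 1 else 0)"
  by (simp add: mu_def)

lemma mu_insert:
  assumes "finite U" "x \<notin> U"
  shows "mu p (insert x U) P = p * mu p U (\<lambda>S. P (insert x S)) + (1 - p) * mu p U P"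
proof -
  have disj: "Pow U \<inter> insert x ` Pow U = {}" using assms by auto
  have inj: "inj_on (insert x) (Pow U)" unfolding inj_on_def by (metis PowD assms(2) insert_ident subset_iff)
  have fin: "finite (Pow U)" using assms by simp
  have cU: "card (insert x U) = Suc (card U)" using assms by simp
  have "mu p (insert x U) P =
     (\<Sum>S\<in>Pow U. p ^ card S * (1 - p) ^ (card (insert x U) - card S) * (if P S then 1 else 0)) +
     (\<Sum>S\<in>insert x ` Pow U. p ^ card S * (1 - p) ^ (card (insert x U) - card S) * (if P S then 1 else 0))"
    unfolding mu_def Pow_insert by (rule sum.union_disjoint) (use fin disj in auto)
  also have "(\<Sum>S\<in>Pow U. p ^ card S * (1 - p) ^ (card (insert x U) - card S) * (if P S then 1 else 0))
      = (1 - p) * mu p U P"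
    unfolding mu_def sum_distrib_left
  proof (rule sum.cong)
    fix S assume "S \<in> Pow U"
    then have "card S \<le> card U" using assms(1) by (simp add: card_mono)
    then have "card (insert x U) - card S = Suc (card U - card S)" using cU by simp
    then show "p ^ card S * (1 - p) ^ (card (insert x U) - card S) * (if P S then 1 else 0) =
      (1 - p) * (p ^ card S * (1 - p) ^ (card U - card S) * (if P S then 1 else 0))" by simp
  qed simp
  also have "(\<Sum>S\<in>insert x ` Pow U. p ^ card S * (1 - p) ^ (card (insert x U) - card S) * (if P S then 1 else 0))
     = p * mu p U (\<lambda>S. P (insert x S))"
    unfolding mu_def sum_distrib_left sum.reindex[OF inj] comp_def
  proof (rule sum.cong)
    fix S assume S: "S \<in> Pow U"
    have "card S \<le> card U" using S assms by (simp add: card_mono)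
    moreover have "finite S" using S assms(1) by (meson PowD finite_subset)
    moreover have "x \<notin> S" using S assms(2) by auto
    ultimately have c1: "card S \<le> card U" "card (insert x S) = Suc (card S)" by simp_all
    then have "card (insert x U) - card (insert x S) = card U - card S"
      "card (insert x S) = Suc (card S)" using cU by simp_all
    then show "p ^ card (insert x S) * (1 - p) ^ (card (insert x U) - card (insert x S)) * (if P (insert x S) then 1 else 0) =
      p * (p ^ card S * (1 - p) ^ (card U - card S) * (if P (insert x S) then 1 else 0))" by simp
  qed simp
  finally show ?thesis by simp
qed

lemma mu_nonneg: "mu p U P \<ge> 0"
  unfolding mu_def using p0 p1 by (intro sum_nonneg) auto

lemma mu_mono: assumes "\<And>S. S \<subseteq> U \<Longrightarrow> P S \<Longrightarrow> Q S" shows "mu p U P \<le> mu p U Q"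
  unfolding mu_def using p0 p1 assms by (intro sum_mono) auto

lemma mu_True: "finite U \<Longrightarrow> mu p U (\<lambda>_. True) = 1"
  by (induction U rule: finite_induct) (simp_all add: mu_empty mu_insert)

lemma mu_le1: assumes "finite U" shows "mu p U P \<le> 1"
proof -
  have "mu p U P \<le> mu p U (\<lambda>_. True)" by (rule mu_mono) simp
  then show ?thesis using mu_True[OF assms] by simp
qed

lemma mu_cong: "(\<And>S. S \<subseteq> U \<Longrightarrow> P S = Q S) \<Longrightarrow> mu p U P = mu p U Q"
  unfolding mu_def by (intro sum.cong) auto

lemma mu_or: "mu p U (\<lambda>S. P S \<or> Q S) = mu p U P + mu p U Q - mu p U (\<lambda>S. P S \<and> Q S)"
proof -
  have "mu p U (\<lambda>S. P S \<or> Q S) + mu p U (\<lambda>S. P S \<and> Q S) = mu p U P + mu p U Q"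
    unfolding mu_def sum.distrib[symmetric] by (rule sum.cong) (auto simp: algebra_simps)
  then show ?thesis by simp
qed

lemma mu_local_aux:
  assumes "finite B" "finite A" "A \<inter> B = {}" "dep A P"
  shows "mu p (A \<union> B) P = mu p A P"
  using assms(1,3)
proof (induction B rule: finite_induct)
  case (insert x B)
  have eq: "(\<lambda>S. P (insert x S)) = P"
  proof
    fix S
    have "insert x S \<inter> A = S \<inter> A" using insert by auto
    then show "P (insert x S) = P S" using assms(4) unfolding dep_def by metis
  qed
  have "mu p (A \<union> insert x B) P = mu p (insert x (A \<union> B)) P" by simp
  also have "\<dots> = mu p (A \<union> B) P"
    using insert assms(2) by (subst mu_insert) (auto simp: eq algebra_simps)
  finally show ?case using insert by simp
qed simp

lemma mu_local:
  assumes "finite U" "A \<subseteq> U" "dep A P"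
  shows "mu p U P = mu p A P"
proof -
  have "U = A \<union> (U - A)" using assms by auto
  then show ?thesis using mu_local_aux[of "U - A" A P] assms finite_subset by fastforce
qed

lemma mu_indep_aux:
  assumes "finite B" "finite A" "A \<inter> B = {}" "dep A P" "dep B Q"
  shows "mu p (A \<union> B) (\<lambda>S. P S \<and> Q S) = mu p A P * mu p B Q"
  using assms(1,3,5)
proof (induction B arbitrary: Q rule: finite_induct)
  case empty
  then have "\<And>S. Q S = Q {}" unfolding dep_def by simp
  then have "(\<lambda>S. P S \<and> Q S) = (if Q {} then P else (\<lambda>_. False))" by auto
  then show ?case by (simp add: mu_empty mu_def)
next
  case (insert x B)
  have eqP: "(\<lambda>S. P (insert x S)) = P"
  proof
    fix S
    have "insert x S \<inter> A = S \<inter> A" using insert by auto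
    then show "P (insert x S) = P S" using assms(4) unfolding dep_def by metis
  qed
  have dQ: "dep B (\<lambda>S. Q (insert x S))" unfolding dep_def
  proof
    fix S
    have "Q (insert x S) = Q (insert x S \<inter> insert x B)" using insert(5) unfolding dep_def by metis
    also have "insert x S \<inter> insert x B = insert x (S \<inter> B) \<inter> insert x B" by auto
    also have "Q \<dots> = Q (insert x (S \<inter> B))" using insert(5) unfolding dep_def by metis
    finally show "Q (insert x S) = Q (insert x (S \<inter> B))" .
  qed
  define Q0 where "Q0 S = Q (S \<inter> B)" for S
  have dQ0: "dep B Q0" unfolding dep_def Q0_def by (simp add: Int_assoc)
  have Q0eq: "Q0 S = Q S" if "x \<notin> S" for S
  proof -
    have "Q S = Q (S \<inter> insert x B)" using insert(5) unfolding dep_def by metis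
    also have "S \<inter> insert x B = S \<inter> B \<inter> insert x B" using that by auto
    also have "Q \<dots> = Q (S \<inter> B)" using insert(5) unfolding dep_def by metis
    finally show ?thesis unfolding Q0_def by simp
  qed
  have AB: "A \<inter> B = {}" using insert by auto
  have fAB: "finite (A \<union> B)" using insert assms(2) by simp
  have xAB: "x \<notin> A \<union> B" using insert by auto
  have "mu p (A \<union> insert x B) (\<lambda>S. P S \<and> Q S) = mu p (insert x (A \<union> B)) (\<lambda>S. P S \<and> Q S)" by simp
  also have "\<dots> = p * mu p (A \<union> B) (\<lambda>S. P S \<and> Q (insert x S)) + (1 - p) * mu p (A \<union> B) (\<lambda>S. P S \<and> Q S)"
  proof -
    have eqPQ: "(\<lambda>S. P (insert x S) \<and> Q (insert x S)) = (\<lambda>S. P S \<and> Q (insert x S))"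
      using fun_cong[OF eqP] by simp
    show ?thesis by (subst mu_insert[OF fAB xAB]) (simp only: eqPQ)
  qed
  also have "mu p (A \<union> B) (\<lambda>S. P S \<and> Q S) = mu p (A \<union> B) (\<lambda>S. P S \<and> Q0 S)"
    using xAB Q0eq by (intro mu_cong) auto
  also have "\<dots> = mu p A P * mu p B Q0" using insert(3)[OF AB dQ0] .
  also have "mu p B Q0 = mu p B Q" using insert(2) Q0eq by (intro mu_cong) auto
  also have "mu p (A \<union> B) (\<lambda>S. P S \<and> Q (insert x S)) = mu p A P * mu p B (\<lambda>S. Q (insert x S))"
    using insert(3)[OF AB dQ] .
  also have "p * (mu p A P * mu p B (\<lambda>S. Q (insert x S))) + (1 - p) * (mu p A P * mu p B Q)
     = mu p A P * mu p (insert x B) Q"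
    unfolding mu_insert[OF insert(1,2), of Q] by (simp add: algebra_simps)
  finally show ?case .
qed

lemma mu_indep:
  assumes "finite U" "A \<subseteq> U" "B \<subseteq> U" "A \<inter> B = {}" "dep A P" "dep B Q"
  shows "mu p U (\<lambda>S. P S \<and> Q S) = mu p U P * mu p U Q"
proof -
  have fA: "finite A" "finite B" using assms(1-3) by (meson finite_subset)+
  have d: "dep (A \<union> B) (\<lambda>S. P S \<and> Q S)" unfolding dep_def
  proof
    fix S
    have "S \<inter> (A \<union> B) \<inter> A = S \<inter> A" "S \<inter> (A \<union> B) \<inter> B = S \<inter> B" by blast+
    then show "(P S \<and> Q S) = (P (S \<inter> (A \<union> B)) \<and> Q (S \<inter> (A \<union> B)))"
      using assms(5,6) unfolding dep_def by metis
  qed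
  have "mu p U (\<lambda>S. P S \<and> Q S) = mu p (A \<union> B) (\<lambda>S. P S \<and> Q S)"
    using mu_local[OF assms(1) _ d] assms by auto
  also have "\<dots> = mu p A P * mu p B Q" using mu_indep_aux[OF fA(2) fA(1) assms(4-6)] .
  also have "mu p A P = mu p U P" by (rule mu_local[symmetric]) (use assms in auto)
  also have "mu p B Q = mu p U Q" by (rule mu_local[symmetric]) (use assms in auto)
  finally show ?thesis .
qed


lemma harris:
  assumes "finite U" "upmono P" "upmono Q"
  shows "mu p U (\<lambda>S. P S \<and> Q S) \<ge> mu p U P * mu p U Q"
  using assms
proof (induction U arbitrary: P Q rule: finite_induct)
  case empty
  then show ?case by (simp add: mu_empty)
next
  case (insert x U)
  define a1 where "a1 = mu p U (\<lambda>S. P (insert x S))"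
  define a0 where "a0 = mu p U P"
  define b1 where "b1 = mu p U (\<lambda>S. Q (insert x S))"
  define b0 where "b0 = mu p U Q"
  have m1: "upmono (\<lambda>S. P (insert x S))" "upmono (\<lambda>S. Q (insert x S))"
    using insert(4,5) unfolding upmono_def by (meson insert_mono)+
  have h1: "mu p U (\<lambda>S. P (insert x S) \<and> Q (insert x S)) \<ge> a1 * b1"
    unfolding a1_def b1_def using insert(3)[OF m1] .
  have h0: "mu p U (\<lambda>S. P S \<and> Q S) \<ge> a0 * b0"
    unfolding a0_def b0_def using insert(3)[OF insert(4,5)] .
  have "a0 \<le> a1" unfolding a0_def a1_def
    using insert(4) unfolding upmono_def by (intro mu_mono) blast
  moreover have "b0 \<le> b1" unfolding b0_def b1_def
    using insert(5) unfolding upmono_def by (intro mu_mono) blast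
  ultimately have key: "p * (a1 * b1) + (1 - p) * (a0 * b0) - (p * a1 + (1 - p) * a0) * (p * b1 + (1 - p) * b0) \<ge> 0"
  proof -
    assume "a0 \<le> a1" "b0 \<le> b1"
    have "p * (a1 * b1) + (1 - p) * (a0 * b0) - (p * a1 + (1 - p) * a0) * (p * b1 + (1 - p) * b0)
      = (p * (1 - p)) * ((a1 - a0) * (b1 - b0))" by (simp add: algebra_simps)
    also have "\<dots> \<ge> 0" using p0 p1 \<open>a0 \<le> a1\<close> \<open>b0 \<le> b1\<close> by (intro mult_nonneg_nonneg) auto
    finally show ?thesis .
  qed
  have e1: "mu p (insert x U) (\<lambda>S. P S \<and> Q S) = p * mu p U (\<lambda>S. P (insert x S) \<and> Q (insert x S)) + (1 - p) * mu p U (\<lambda>S. P S \<and> Q S)"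
    by (rule mu_insert[OF insert(1,2)])
  have e2: "mu p (insert x U) P = p * a1 + (1 - p) * a0"
    unfolding a1_def a0_def by (rule mu_insert[OF insert(1,2)])
  have e3: "mu p (insert x U) Q = p * b1 + (1 - p) * b0"
    unfolding b1_def b0_def by (rule mu_insert[OF insert(1,2)])
  have i1: "p * (a1 * b1) \<le> p * mu p U (\<lambda>S. P (insert x S) \<and> Q (insert x S))"
    using h1 p0 by (rule mult_left_mono)
  have i2: "(1 - p) * (a0 * b0) \<le> (1 - p) * mu p U (\<lambda>S. P S \<and> Q S)"
    using h0 p1 by (intro mult_left_mono) auto
  show ?case unfolding e1 e2 e3 using i1 i2 key by linarith
qed

lemma mu_single: assumes "finite U" "z \<in> U" shows "mu p U (\<lambda>S. z \<in> S) = p"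
proof -
  have "mu p U (\<lambda>S. z \<in> S) = mu p {z} (\<lambda>S. z \<in> S)"
    using assms by (intro mu_local) (auto simp: dep_def)
  also have "\<dots> = p" using mu_insert[of "{}" z] by (simp add: mu_empty)
  finally show ?thesis .
qed

end


fun win :: "nat \<Rightarrow> (nat list \<Rightarrow> nat list \<Rightarrow> bool) \<Rightarrow> bool" where
  "win 0 G = G [] []"
| "win (Suc k) G = (\<forall>x\<in>{1,2}. \<exists>y\<in>{1,2}. win k (\<lambda>a b. G (x # a) (y # b)))"

lemma moves_0[simp]: "moves 0 = {[]}" by (auto simp: moves_def)
lemma Cons_moves[simp]: "x # a \<in> moves (Suc k) \<longleftrightarrow> x \<in> {1,2} \<and> a \<in> moves k"
  by (auto simp: moves_def)
lemma moves_Suc_cases: "c \<in> moves (Suc k) \<Longrightarrow> \<exists>x a. c = x # a \<and> x \<in> {1,2} \<and> a \<in> moves k"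
  by (cases c) (auto simp: moves_def)
lemma finite_moves: "finite (moves n)"
proof -
  have "moves n = {xs. set xs \<subseteq> {1,2} \<and> length xs = n}" by (auto simp: moves_def)
  then show ?thesis using finite_lists_length_eq[of "{1::nat,2}" n] by simp
qed
lemma ones_le: "b \<in> moves k \<Longrightarrow> ones b \<le> k"
  unfolding ones_def moves_def by (metis (mono_tags, lifting) length_filter_le mem_Collect_eq)

lemma win_cong: "(\<And>a b. a \<in> moves k \<Longrightarrow> b \<in> moves k \<Longrightarrow> G a b = G' a b) \<Longrightarrow> win k G = win k G'"
proof (induction k arbitrary: G G')
  case 0 then show ?case by simp
next
  case (Suc k)
  have "\<And>x y. x \<in> {1,2} \<Longrightarrow> y \<in> {1,2} \<Longrightarrow> win k (\<lambda>a b. G (x # a) (y # b)) = win k (\<lambda>a b. G' (x # a) (y # b))"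
    by (rule Suc.IH) (simp add: Suc.prems)
  then show ?case by simp
qed

lemma win_mono: "(\<And>a b. G a b \<Longrightarrow> G' a b) \<Longrightarrow> win k G \<Longrightarrow> win k G'"
proof (induction k arbitrary: G G')
  case 0 then show ?case by simp
next
  case (Suc k)
  show ?case using Suc.prems(2) Suc.IH[of "\<lambda>a b. G (_ # a) (_ # b)" "\<lambda>a b. G' (_ # a) (_ # b)"] Suc.prems(1)
    by (simp; blast)
qed

lemma bob_resp_cong: "(\<And>t. \<sigma> (h @ t) = \<tau> (h @ t)) \<Longrightarrow> bob_resp \<sigma> h a = bob_resp \<tau> h a"
proof (induction a arbitrary: h)
  case Nil then show ?case by simp
next
  case (Cons x xs)
  have e: "\<sigma> (h @ [x]) = \<tau> (h @ [x])" using Cons.prems by simp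
  have "bob_resp \<sigma> (h @ [x, \<sigma> (h @ [x])]) xs = bob_resp \<tau> (h @ [x, \<sigma> (h @ [x])]) xs"
    by (rule Cons.IH) (metis Cons.prems append_assoc)
  then show ?case using e by simp
qed

lemma bw: "(\<exists>\<sigma>. (\<forall>h. \<sigma> h \<in> {1,2}) \<and> (\<forall>a\<in>moves k. G a (bob_resp \<sigma> h a))) = win k G"
proof (induction k arbitrary: h G)
  case 0
  show ?case by (auto intro!: exI[of _ "\<lambda>_. 1"])
next
  case (Suc k)
  show ?case
  proof
    assume "\<exists>\<sigma>. (\<forall>h. \<sigma> h \<in> {1,2}) \<and> (\<forall>a\<in>moves (Suc k). G a (bob_resp \<sigma> h a))"
    then obtain \<sigma> where s1: "\<forall>h. \<sigma> h \<in> {1,2}" and s2: "\<forall>a\<in>moves (Suc k). G a (bob_resp \<sigma> h a)" by blast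
    have "\<exists>y\<in>{1,2}. win k (\<lambda>a b. G (x # a) (y # b))" if x: "x \<in> {1,2}" for x
    proof (intro bexI)
      show "win k (\<lambda>a b. G (x # a) (\<sigma> (h @ [x]) # b))"
        unfolding Suc.IH[symmetric, of _ "h @ [x, \<sigma> (h @ [x])]"]
      proof (intro exI conjI ballI)
        fix a assume "a \<in> moves k"
        then show "G (x # a) (\<sigma> (h @ [x]) # bob_resp \<sigma> (h @ [x, \<sigma> (h @ [x])]) a)"
          using s2 x by (metis Cons_moves bob_resp.simps(2))
      qed (use s1 in blast)
    qed (use s1 in blast)
    then show "win (Suc k) G" by simp
  next
    assume "win (Suc k) G"
    then have w: "\<forall>x\<in>{1,2}. \<exists>y\<in>{1,2}. win k (\<lambda>a b. G (x # a) (y # b))" by simp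
    obtain y1 where y1: "y1 \<in> {1,2}" "win k (\<lambda>a b. G (1 # a) (y1 # b))" using w by auto
    obtain y2 where y2: "y2 \<in> {1,2}" "win k (\<lambda>a b. G (2 # a) (y2 # b))" using w by auto
    obtain \<sigma>1 where s1: "\<forall>h. \<sigma>1 h \<in> {1,2}" "\<forall>a\<in>moves k. G (1 # a) (y1 # bob_resp \<sigma>1 (h @ [1, y1]) a)"
      using y1(2) Suc.IH[where h="h @ [1, y1]" and G="\<lambda>a b. G (1 # a) (y1 # b)"] by auto
    obtain \<sigma>2 where s2: "\<forall>h. \<sigma>2 h \<in> {1,2}" "\<forall>a\<in>moves k. G (2 # a) (y2 # bob_resp \<sigma>2 (h @ [2, y2]) a)"
      using y2(2) Suc.IH[where h="h @ [2, y2]" and G="\<lambda>a b. G (2 # a) (y2 # b)"] by auto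
    define \<sigma> where "\<sigma> g = (if g = h @ [1] then y1 else if g = h @ [2] then y2
        else if (\<exists>t. g = h @ [1, y1] @ t) then \<sigma>1 g else if (\<exists>t. g = h @ [2, y2] @ t) then \<sigma>2 g else 1)" for g
    have sv: "\<forall>g. \<sigma> g \<in> {1,2}" unfolding \<sigma>_def using s1 s2 y1 y2 by auto
    have c1: "bob_resp \<sigma> (h @ [1, y1]) a = bob_resp \<sigma>1 (h @ [1, y1]) a" for a
      by (rule bob_resp_cong) (auto simp: \<sigma>_def)
    have c2: "bob_resp \<sigma> (h @ [2, y2]) a = bob_resp \<sigma>2 (h @ [2, y2]) a" for a
      by (rule bob_resp_cong) (auto simp: \<sigma>_def)
    have "\<forall>c\<in>moves (Suc k). G c (bob_resp \<sigma> h c)"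
    proof
      fix c assume "c \<in> moves (Suc k)"
      then obtain x a where c: "c = x # a" "x \<in> {1,2}" "a \<in> moves k" using moves_Suc_cases by blast
      show "G c (bob_resp \<sigma> h c)"
      proof (cases "x = 1")
        case True
        have "\<sigma> (h @ [1]) = y1" by (simp add: \<sigma>_def)
        then show ?thesis using c True s1(2) c1 by simp
      next
        case False
        then have x2: "x = 2" using c by simp
        have "\<sigma> (h @ [2]) = y2" by (simp add: \<sigma>_def)
        then show ?thesis using c x2 s2(2) c2 by simp
      qed
    qed
    then show "\<exists>\<sigma>. (\<forall>h. \<sigma> h \<in> {1,2}) \<and> (\<forall>a\<in>moves (Suc k). G a (bob_resp \<sigma> h a))"
      using sv by blast
  qed
qed

lemma bob_wins_win: "bob_wins n out S = win n (\<lambda>a b. out a b \<in> S)"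
  unfolding bob_wins_def using bw[of n "\<lambda>a b. out a b \<in> S" "[]"] by simp



fun F :: "real \<Rightarrow> nat \<Rightarrow> real" where
  "F p 0 = p"
| "F p (Suc k) = (1 - (1 - F p k)^2)^2"

lemma F_bounds: "0 \<le> p \<Longrightarrow> p \<le> 1 \<Longrightarrow> 0 \<le> F p k \<and> F p k \<le> 1"
proof (induction k)
  case 0 then show ?case by simp
next
  case (Suc k)
  then have a: "0 \<le> 1 - F p k" "1 - F p k \<le> 1" by auto
  have "0 \<le> (1 - F p k)^2" "(1 - F p k)^2 \<le> 1" using a by (simp_all add: power_le_one)
  then have "0 \<le> 1 - (1 - F p k)^2" "1 - (1 - F p k)^2 \<le> 1" by auto
  then show ?case by (simp add: power_le_one)
qed

lemma dep_or: "dep A P \<Longrightarrow> dep B Q \<Longrightarrow> dep (A \<union> B) (\<lambda>S. P S \<or> Q S)"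
  unfolding dep_def
proof (intro allI)
  fix S assume "\<forall>S. P S = P (S \<inter> A)" "\<forall>S. Q S = Q (S \<inter> B)"
  moreover have "S \<inter> (A \<union> B) \<inter> A = S \<inter> A" "S \<inter> (A \<union> B) \<inter> B = S \<inter> B" by blast+
  ultimately show "(P S \<or> Q S) = (P (S \<inter> (A \<union> B)) \<or> Q (S \<inter> (A \<union> B)))" by metis
qed

lemma upmono_or: "upmono P \<Longrightarrow> upmono Q \<Longrightarrow> upmono (\<lambda>S. P S \<or> Q S)"
  unfolding upmono_def by blast

lemma upmono_win: "upmono (\<lambda>S. win k (\<lambda>a b. f a b \<in> S))"
  unfolding upmono_def
proof (intro allI impI)
  fix S T :: "'a set" assume "S \<subseteq> T" "win k (\<lambda>a b. f a b \<in> S)"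
  then show "win k (\<lambda>a b. f a b \<in> T)" using win_mono[of "\<lambda>a b. f a b \<in> S" "\<lambda>a b. f a b \<in> T" k] by blast
qed

lemma mu_or_indep:
  assumes "0 \<le> p" "p \<le> 1" "finite U" "A \<subseteq> U" "B \<subseteq> U" "A \<inter> B = {}" "dep A P" "dep B Q"
  shows "mu p U (\<lambda>S. P S \<or> Q S) = mu p U P + mu p U Q - mu p U P * mu p U Q"
  unfolding mu_or[OF assms(1,2), of U P Q] mu_indep[OF assms] by simp

definition LAB :: "nat list \<Rightarrow> nat list \<Rightarrow> nat \<Rightarrow> (nat list \<times> nat list) set" where
  "LAB \<alpha> \<beta> k = {(\<alpha> @ a, \<beta> @ b) | a b. a \<in> moves k \<and> b \<in> moves k}"

lemma game_AB:
  assumes p: "0 \<le> p" "p \<le> 1"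
  shows "finite U \<Longrightarrow> LAB \<alpha> \<beta> k \<subseteq> U \<Longrightarrow> mu p U (\<lambda>S. win k (\<lambda>a b. (\<alpha> @ a, \<beta> @ b) \<in> S)) = F p k"
proof (induction k arbitrary: \<alpha> \<beta>)
  case 0
  then have "(\<alpha>, \<beta>) \<in> U" by (auto simp: LAB_def)
  then show ?case using mu_single[OF p 0(1)] by simp
next
  case (Suc k)
  define E where "E x y S = win k (\<lambda>a b. ((\<alpha> @ [x]) @ a, (\<beta> @ [y]) @ b) \<in> S)" for x y S
  define L where "L x y = LAB (\<alpha> @ [x]) (\<beta> @ [y]) k" for x y
  have unf: "(\<lambda>S. win (Suc k) (\<lambda>a b. (\<alpha> @ a, \<beta> @ b) \<in> S)) = (\<lambda>S. (E 1 1 S \<or> E 1 2 S) \<and> (E 2 1 S \<or> E 2 2 S))"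
    by (simp add: E_def)
  have sub: "L x y \<subseteq> U" if "x \<in> {1,2}" "y \<in> {1,2}" for x y
    using Suc.prems(2) that unfolding L_def LAB_def by force
  have dep: "dep (L x y) (E x y)" for x y
    unfolding dep_def E_def
  proof
    fix S show "win k (\<lambda>a b. ((\<alpha> @ [x]) @ a, (\<beta> @ [y]) @ b) \<in> S) = win k (\<lambda>a b. ((\<alpha> @ [x]) @ a, (\<beta> @ [y]) @ b) \<in> S \<inter> L x y)"
      by (rule win_cong) (auto simp: L_def LAB_def)
  qed
  have mE: "mu p U (E x y) = F p k" if "x \<in> {1,2}" "y \<in> {1,2}" for x y
    unfolding E_def using Suc.IH[OF Suc.prems(1) sub[OF that, unfolded L_def]] .
  have disj: "L x y \<inter> L x' y' = {}" if "x \<noteq> x' \<or> y \<noteq> y'" for x y x' y'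
    using that unfolding L_def LAB_def by auto
  let ?f = "F p k"
  have o1: "mu p U (\<lambda>S. E 1 1 S \<or> E 1 2 S) = ?f + ?f - ?f * ?f"
    using mu_or_indep[OF p Suc.prems(1) sub sub disj dep dep, of 1 1 1 2] mE by simp
  have o2: "mu p U (\<lambda>S. E 2 1 S \<or> E 2 2 S) = ?f + ?f - ?f * ?f"
    using mu_or_indep[OF p Suc.prems(1) sub sub disj dep dep, of 2 1 2 2] mE by simp
  have d12: "(L 1 1 \<union> L 1 2) \<inter> (L 2 1 \<union> L 2 2) = {}"
  proof -
    have dd: "L 1 y \<inter> L 2 y' = {}" for y y' by (rule disj) simp
    show ?thesis using dd[of 1 1] dd[of 1 2] dd[of 2 1] dd[of 2 2] by blast
  qed
  have "mu p U (\<lambda>S. (E 1 1 S \<or> E 1 2 S) \<and> (E 2 1 S \<or> E 2 2 S)) =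
      mu p U (\<lambda>S. E 1 1 S \<or> E 1 2 S) * mu p U (\<lambda>S. E 2 1 S \<or> E 2 2 S)"
    by (rule mu_indep[OF p Suc.prems(1), where A="L 1 1 \<union> L 1 2" and B="L 2 1 \<union> L 2 2"])
       (use sub[of 1 1] sub[of 1 2] sub[of 2 1] sub[of 2 2] d12 dep_or[OF dep dep] in auto)
  also have "\<dots> = F p (Suc k)" unfolding o1 o2 by (simp add: power2_eq_square algebra_simps)
  finally show ?case unfolding unf .
qed

lemma or_upper:
  fixes e1 e2 f :: real
  assumes "0 \<le> e1" "e1 \<le> f" "0 \<le> e2" "e2 \<le> f" "f \<le> 1" "m \<ge> e1 * e2"
  shows "e1 + e2 - m \<le> 1 - (1 - f)^2"
proof -
  have "(1 - f) * (1 - f) \<le> (1 - e1) * (1 - e2)" using assms by (intro mult_mono) auto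
  then show ?thesis using assms(6) by (simp add: power2_eq_square algebra_simps)
qed

lemma or_lower:
  fixes e1 e2 f :: real
  assumes "f \<le> e1" "e1 \<le> 1" "f \<le> e2" "e2 \<le> 1"
  shows "e1 + e2 - e1 * e2 \<ge> 1 - (1 - f)^2"
proof -
  have "(1 - e1) * (1 - e2) \<le> (1 - f) * (1 - f)" using assms by (intro mult_mono) auto
  then show ?thesis by (simp add: power2_eq_square algebra_simps)
qed

definition LAb :: "nat list \<Rightarrow> nat \<Rightarrow> nat \<Rightarrow> (nat list \<times> nat) set" where
  "LAb \<alpha> c k = {(\<alpha> @ a, c + m) | a m. a \<in> moves k \<and> m \<le> k}"

lemma ones_Cons: "ones (y # b) = (if y = 1 then 1 else 0) + ones b"
  by (simp add: ones_def)

lemma game_Ab: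
  assumes p: "0 \<le> p" "p \<le> 1"
  shows "finite U \<Longrightarrow> LAb \<alpha> c k \<subseteq> U \<Longrightarrow> mu p U (\<lambda>S. win k (\<lambda>a b. (\<alpha> @ a, c + ones b) \<in> S)) \<le> F p k"
proof (induction k arbitrary: \<alpha> c)
  case 0
  then have "(\<alpha>, c) \<in> U" by (auto simp: LAb_def)
  then show ?case using mu_single[OF p 0(1)] by (simp add: ones_def)
next
  case (Suc k)
  define d where "d y = c + (if y = (1::nat) then 1 else 0)" for y
  define E where "E x y S = win k (\<lambda>a b. ((\<alpha> @ [x]) @ a, d y + ones b) \<in> S)" for x y S
  define L where "L x y = LAb (\<alpha> @ [x]) (d y) k" for x y
  have unf: "(\<lambda>S. win (Suc k) (\<lambda>a b. (\<alpha> @ a, c + ones b) \<in> S)) = (\<lambda>S. (E 1 1 S \<or> E 1 2 S) \<and> (E 2 1 S \<or> E 2 2 S))"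
    by (simp add: E_def d_def ones_Cons)
  have sub: "L x y \<subseteq> U" if "x \<in> {1,2}" "y \<in> {1,2}" for x y
  proof
    fix z assume "z \<in> L x y"
    then obtain a m where z: "z = ((\<alpha> @ [x]) @ a, d y + m)" "a \<in> moves k" "m \<le> k"
      unfolding L_def LAb_def by blast
    have "z = (\<alpha> @ (x # a), c + ((if y = 1 then 1 else 0) + m))" using z by (simp add: d_def)
    moreover have "x # a \<in> moves (Suc k)" using z that by simp
    moreover have "(if y = 1 then 1 else 0) + m \<le> Suc k" using z by simp
    ultimately have "z \<in> LAb \<alpha> c (Suc k)" unfolding LAb_def by blast
    then show "z \<in> U" using Suc.prems(2) by blast
  qed
  have dep: "dep (L x y) (E x y)" for x y
    unfolding dep_def E_def
  proof
    fix S show "win k (\<lambda>a b. ((\<alpha> @ [x]) @ a, d y + ones b) \<in> S) = win k (\<lambda>a b. ((\<alpha> @ [x]) @ a, d y + ones b) \<in> S \<inter> L x y)"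
      by (rule win_cong) (auto simp: L_def LAb_def intro: ones_le)
  qed
  have mE: "mu p U (E x y) \<le> F p k" if "x \<in> {1,2}" "y \<in> {1,2}" for x y
    unfolding E_def using Suc.IH[OF Suc.prems(1) sub[OF that, unfolded L_def]] .
  have dd: "L 1 y \<inter> L 2 y' = {}" for y y' unfolding L_def LAb_def by auto
  let ?f = "F p k"
  have fb: "0 \<le> ?f" "?f \<le> 1" using F_bounds[OF p] by auto
  have up: "upmono (E x y)" for x y unfolding E_def by (rule upmono_win)
  have ox: "mu p U (\<lambda>S. E x 1 S \<or> E x 2 S) \<le> 1 - (1 - ?f)^2" if "x \<in> {1,2}" for x
  proof -
    have "mu p U (\<lambda>S. E x 1 S \<or> E x 2 S) = mu p U (E x 1) + mu p U (E x 2) - mu p U (\<lambda>S. E x 1 S \<and> E x 2 S)"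
      by (rule mu_or[OF p])
    also have "\<dots> \<le> 1 - (1 - ?f)^2"
      by (rule or_upper) (use mE[OF that] mu_nonneg[OF p] harris[OF p Suc.prems(1) up up] fb in auto)
    finally show ?thesis .
  qed
  have d12: "(L 1 1 \<union> L 1 2) \<inter> (L 2 1 \<union> L 2 2) = {}"
    using dd[of 1 1] dd[of 1 2] dd[of 2 1] dd[of 2 2] by blast
  have "mu p U (\<lambda>S. (E 1 1 S \<or> E 1 2 S) \<and> (E 2 1 S \<or> E 2 2 S)) =
      mu p U (\<lambda>S. E 1 1 S \<or> E 1 2 S) * mu p U (\<lambda>S. E 2 1 S \<or> E 2 2 S)"
    by (rule mu_indep[OF p Suc.prems(1), where A="L 1 1 \<union> L 1 2" and B="L 2 1 \<union> L 2 2"])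
       (use sub[of 1 1] sub[of 1 2] sub[of 2 1] sub[of 2 2] d12 dep_or[OF dep dep] in auto)
  also have "\<dots> \<le> (1 - (1 - ?f)^2) * (1 - (1 - ?f)^2)"
    using ox[of 1] ox[of 2] mu_nonneg[OF p] fb by (intro mult_mono) (auto simp: power_le_one)
  also have "\<dots> = F p (Suc k)" by (simp add: power2_eq_square)
  finally show ?case unfolding unf .
qed

definition LaB :: "nat \<Rightarrow> nat list \<Rightarrow> nat \<Rightarrow> (nat \<times> nat list) set" where
  "LaB c \<beta> k = {(c + m, \<beta> @ b) | m b. m \<le> k \<and> b \<in> moves k}"

lemma game_aB:
  assumes p: "0 \<le> p" "p \<le> 1"
  shows "finite U \<Longrightarrow> LaB c \<beta> k \<subseteq> U \<Longrightarrow> mu p U (\<lambda>S. win k (\<lambda>a b. (c + ones a, \<beta> @ b) \<in> S)) \<ge> F p k"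
proof (induction k arbitrary: \<beta> c)
  case 0
  then have "(c, \<beta>) \<in> U" by (auto simp: LaB_def)
  then show ?case using mu_single[OF p 0(1)] by (simp add: ones_def)
next
  case (Suc k)
  define d where "d y = c + (if y = (1::nat) then 1 else 0)" for y
  define E where "E x y S = win k (\<lambda>a b. (d x + ones a, (\<beta> @ [y]) @ b) \<in> S)" for x y S
  define L where "L x y = LaB (d x) (\<beta> @ [y]) k" for x y
  have unf: "(\<lambda>S. win (Suc k) (\<lambda>a b. (c + ones a, \<beta> @ b) \<in> S)) = (\<lambda>S. (E 1 1 S \<or> E 1 2 S) \<and> (E 2 1 S \<or> E 2 2 S))"
    by (simp add: E_def d_def ones_Cons)
  have sub: "L x y \<subseteq> U" if "x \<in> {1,2}" "y \<in> {1,2}" for x y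
  proof
    fix z assume "z \<in> L x y"
    then obtain b m where z: "z = (d x + m, (\<beta> @ [y]) @ b)" "b \<in> moves k" "m \<le> k"
      unfolding L_def LaB_def by blast
    have "z = (c + ((if x = 1 then 1 else 0) + m), \<beta> @ (y # b))" using z by (simp add: d_def)
    moreover have "y # b \<in> moves (Suc k)" using z that by simp
    moreover have "(if x = 1 then 1 else 0) + m \<le> Suc k" using z by simp
    ultimately have "z \<in> LaB c \<beta> (Suc k)" unfolding LaB_def by blast
    then show "z \<in> U" using Suc.prems(2) by blast
  qed
  have dep: "dep (L x y) (E x y)" for x y
    unfolding dep_def E_def
  proof
    fix S show "win k (\<lambda>a b. (d x + ones a, (\<beta> @ [y]) @ b) \<in> S) = win k (\<lambda>a b. (d x + ones a, (\<beta> @ [y]) @ b) \<in> S \<inter> L x y)"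
      by (rule win_cong) (auto simp: L_def LaB_def intro: ones_le)
  qed
  have mE: "mu p U (E x y) \<ge> F p k" if "x \<in> {1,2}" "y \<in> {1,2}" for x y
    unfolding E_def using Suc.IH[OF Suc.prems(1) sub[OF that, unfolded L_def]] .
  have dd: "L x 1 \<inter> L x 2 = {}" for x unfolding L_def LaB_def by auto
  let ?f = "F p k"
  have fb: "0 \<le> ?f" "?f \<le> 1" using F_bounds[OF p] by auto
  have up: "upmono (E x y)" for x y unfolding E_def by (rule upmono_win)
  have ox: "mu p U (\<lambda>S. E x 1 S \<or> E x 2 S) \<ge> 1 - (1 - ?f)^2" if "x \<in> {1,2}" for x
  proof -
    have "mu p U (\<lambda>S. E x 1 S \<or> E x 2 S) = mu p U (E x 1) + mu p U (E x 2) - mu p U (E x 1) * mu p U (E x 2)"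
      by (rule mu_or_indep[OF p Suc.prems(1) sub[OF that] sub[OF that] dd dep dep]) simp_all
    also have "\<dots> \<ge> 1 - (1 - ?f)^2"
      by (rule or_lower) (use mE[OF that] mu_le1[OF p Suc.prems(1)] in auto)
    finally show ?thesis .
  qed
  have "(1 - (1 - ?f)^2) * (1 - (1 - ?f)^2) \<le> mu p U (\<lambda>S. E 1 1 S \<or> E 1 2 S) * mu p U (\<lambda>S. E 2 1 S \<or> E 2 2 S)"
  proof (rule mult_mono)
    show "0 \<le> 1 - (1 - ?f)^2" using fb by (simp add: power_le_one)
  qed (use ox[of 1] ox[of 2] mu_nonneg[OF p] in auto)
  also have "\<dots> \<le> mu p U (\<lambda>S. (E 1 1 S \<or> E 1 2 S) \<and> (E 2 1 S \<or> E 2 2 S))"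
    by (rule harris[OF p Suc.prems(1) upmono_or[OF up up] upmono_or[OF up up]])
  finally show ?case unfolding unf by (simp add: power2_eq_square)
qed



lemma win_prob_eq: "win_prob n out p = mu p (outcomes n out) (\<lambda>S. win n (\<lambda>a b. out a b \<in> S))"
  unfolding win_prob_def mu_def bob_wins_win by simp

lemma finite_outcomes: "finite (outcomes n out)"
proof -
  have "outcomes n out = (\<lambda>(a,b). out a b) ` (moves n \<times> moves n)" by (auto simp: outcomes_def)
  then show ?thesis using finite_moves by simp
qed

lemma ones_witness: "m \<le> n \<Longrightarrow> \<exists>b\<in>moves n. ones b = m"
proof
  assume "m \<le> n"
  show "replicate m 1 @ replicate (n - m) 2 \<in> moves n" using \<open>m \<le> n\<close> by (auto simp: moves_def)
  show "ones (replicate m 1 @ replicate (n - m) 2) = m" by (simp add: ones_def)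
qed

theorem proposition1:
  fixes p :: real and n :: nat
  assumes "0 \<le> p" and "p \<le> 1" and "n \<ge> 1"
  shows "P_Ab n p \<le> P_AB n p \<and> P_aB n p \<ge> P_AB n p"
proof -
  have AB: "P_AB n p = F p n"
  proof -
    have "mu p (outcomes n (\<lambda>a b. (a, b))) (\<lambda>S. win n (\<lambda>a b. ([] @ a, [] @ b) \<in> S)) = F p n"
      by (rule game_AB[OF assms(1,2) finite_outcomes]) (auto simp: outcomes_def LAB_def)
    then show ?thesis unfolding P_AB_def win_prob_eq by simp
  qed
  have Ab: "P_Ab n p \<le> F p n"
  proof -
    have "mu p (outcomes n (\<lambda>a b. (a, ones b))) (\<lambda>S. win n (\<lambda>a b. ([] @ a, 0 + ones b) \<in> S)) \<le> F p n"
    proof (rule game_Ab[OF assms(1,2) finite_outcomes])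
      show "LAb [] 0 n \<subseteq> outcomes n (\<lambda>a b. (a, ones b))"
      proof
        fix z assume "z \<in> LAb [] 0 n"
        then obtain a m where z: "z = (a, m)" "a \<in> moves n" "m \<le> n" unfolding LAb_def by auto
        obtain b where "b \<in> moves n" "ones b = m" using ones_witness[OF z(3)] by blast
        then show "z \<in> outcomes n (\<lambda>a b. (a, ones b))" using z unfolding outcomes_def by blast
      qed
    qed
    then show ?thesis unfolding P_Ab_def win_prob_eq by simp
  qed
  have aB: "P_aB n p \<ge> F p n"
  proof -
    have "mu p (outcomes n (\<lambda>a b. (ones a, b))) (\<lambda>S. win n (\<lambda>a b. (0 + ones a, [] @ b) \<in> S)) \<ge> F p n"
    proof (rule game_aB[OF assms(1,2) finite_outcomes])
      show "LaB 0 [] n \<subseteq> outcomes n (\<lambda>a b. (ones a, b))"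
      proof
        fix z assume "z \<in> LaB 0 [] n"
        then obtain b m where z: "z = (m, b)" "b \<in> moves n" "m \<le> n" unfolding LaB_def by auto
        obtain a where "a \<in> moves n" "ones a = m" using ones_witness[OF z(3)] by blast
        then show "z \<in> outcomes n (\<lambda>a b. (ones a, b))" using z unfolding outcomes_def by blast
      qed
    qed
    then show ?thesis unfolding P_aB_def win_prob_eq by simp
  qed
  show ?thesis using AB Ab aB by simp
qed


end
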